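(* Let $\Delta$ be a finite, flag, simply connected simplicial complex, with $\mathcal{P}_H$, $q$, $T$, $p_n$, $L$, $w_e$ and $\Phi_n$ as in the context, and let $K$ be a constant such that $\mathrm{Area}_{\mathcal{P}_H}\big(p_n(q,\iota e)\,e^n\,p_n(\tau e,q)\big)\le K|n|^2$ for all $e\in\mathrm{Edge}(\Delta)$ and $n\in\mathbb{Z}$. Then for all $e\in\mathrm{Edge}(\Delta)$ and $n\in\mathbb{Z}$, $\mathrm{Area}_{\mathcal{P}_H}\big(\Phi_{n+1}(e)\,\Phi_n(w_e)^{-1}\big)\le 2K|n|^2+(3L^2+2L+2K)|n|+L+K$.
   Context: $\mathrm{Edge}(\Delta)$ is the set of directed edges of $\Delta$; for $e$ in it, $\iota e$, $\tau e$ are its initial and terminal vertices and $\overline{e}$ is the reversed edge. $e_1\cdot\ldots\cdot e_l$ is a combinatorial path if $\tau e_i=\iota e_{i+1}$, and a combinatorial 1-cycle if also $\tau e_l=\iota e_1$. $\mathcal{P}_H=\langle\mathrm{Edge}(\Delta)\mid\mathcal{R}_H\rangle$ where $\mathcal{R}_H$ consists of the words $e\overline{e}$ ($e\in\mathrm{Edge}(\Delta)$) and $efg$, $e^{-1}f^{-1}g^{-1}$ for every combinatorial 1-cycle $e\cdot f\cdot g$. $\mathrm{Area}_{\mathcal{P}_H}(w)$ is the least $m$ such that $w$ is freely equal to $\prod_{i=1}^m x_ir_ix_i^{-1}$ with $r_i\in\mathcal{R}_H^{\pm1}$. For a letter $e$ and $k\in\mathbb{Z}$, $e^k$ is the word of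 $k$ copies of $e$ if $k\ge0$ and $|k|$ copies of $e^{-1}$ if $k<0$. Fix a vertex $q$ and a spanning tree $T$ of the 1-skeleton of $\Delta$; $p_n(u,v)=e_1^n\cdots e_l^n$ where $e_1\cdot\ldots\cdot e_l$ is the unique geodesic combinatorial path in $T$ from $u$ to $v$, and $p(u,v)=p_1(u,v)$. For $e\in\mathrm{Edge}(\Delta)$, $w_e=p(q,\iota e)\,e\,p(\iota e,q)$. $L$ is the maximum over vertices $u,v$ of their edge-path distance in $T$. $\Phi_n$ ($n\in\mathbb{Z}$) is the endomorphism of the free monoid on $\mathrm{Edge}(\Delta)^{\pm1}$ with $\Phi_n(e)=p_n(q,\iota e)\,e^{n+1}\,p_n(\tau e,q)$ and $\Phi_n(e^{-1})=\Phi_n(e)^{-1}$ (formal inverse word). *)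

theory Defs
  imports "HOL-Analysis.Analysis" "HOL-Library.Extended_Real"
begin

text \<open>A simplicial complex on vertex type 'v is a set of nonempty finite vertex sets,
closed under nonempty subsets. Since 'v is required to be finite below, the complex is finite.\<close>

definition simplicial_complex :: "'v set set \<Rightarrow> bool" where
  "simplicial_complex \<Delta> \<longleftrightarrow>
     (\<forall>\<sigma>\<in>\<Delta>. finite \<sigma> \<and> \<sigma> \<noteq> {} \<and> (\<forall>\<tau>. \<tau> \<subseteq> \<sigma> \<and> \<tau> \<noteq> {} \<longrightarrow> \<tau> \<in> \<Delta>))"

definition vertices :: "'v set set \<Rightarrow> 'v set" where
  "vertices \<Delta> = \<Union>\<Delta>"

definition flag :: "'v set set \<Rightarrow> bool" where
  "flag \<Delta> \<longleftrightarrow>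
     (\<forall>\<sigma>. finite \<sigma> \<and> \<sigma> \<noteq> {} \<and> \<sigma> \<subseteq> vertices \<Delta> \<and>
          (\<forall>u\<in>\<sigma>. \<forall>v\<in>\<sigma>. u \<noteq> v \<longrightarrow> {u, v} \<in> \<Delta>) \<longrightarrow> \<sigma> \<in> \<Delta>)"

definition realization :: "('v::finite) set set \<Rightarrow> (real ^ 'v) set" where
  "realization \<Delta> = {x. (\<forall>i. 0 \<le> x $ i) \<and> (\<Sum>i\<in>UNIV. x $ i) = 1 \<and> {i. x $ i \<noteq> 0} \<in> \<Delta>}"

definition Edge :: "'v set set \<Rightarrow> ('v \<times> 'v) set" where
  "Edge \<Delta> = {(u, v). u \<noteq> v \<and> {u, v} \<in> \<Delta>}"

abbreviation iota :: "'v \<times> 'v \<Rightarrow> 'v" where "iota e \<equiv> fst e"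
abbreviation tau :: "'v \<times> 'v \<Rightarrow> 'v" where "tau e \<equiv> snd e"
abbreviation rev_edge :: "'v \<times> 'v \<Rightarrow> 'v \<times> 'v" where "rev_edge e \<equiv> prod.swap e"

fun cpath :: "('v \<times> 'v) set \<Rightarrow> 'v \<Rightarrow> 'v \<Rightarrow> ('v \<times> 'v) list \<Rightarrow> bool" where
  "cpath E u v [] = (u = v)"
| "cpath E u v (e # es) = (e \<in> E \<and> iota e = u \<and> cpath E (tau e) v es)"

definition tree_edges :: "'v set set \<Rightarrow> ('v \<times> 'v) set" where
  "tree_edges T = {(u, v). u \<noteq> v \<and> {u, v} \<in> T}"

definition spanning_tree :: "'v set set \<Rightarrow> 'v set set \<Rightarrow> bool" where
  "spanning_tree \<Delta> T \<longleftrightarrow>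
     T \<subseteq> {\<sigma> \<in> \<Delta>. card \<sigma> = 2} \<and>
     (\<forall>u\<in>vertices \<Delta>. \<forall>v\<in>vertices \<Delta>. \<exists>es. cpath (tree_edges T) u v es) \<and>
     \<comment> \<open>acyclic: no simple cycle of length at least 3\<close>
     (\<nexists>u es. 3 \<le> length es \<and> cpath (tree_edges T) u u es \<and> distinct (map iota es))"

definition tgeod :: "'v set set \<Rightarrow> 'v \<Rightarrow> 'v \<Rightarrow> ('v \<times> 'v) list" where
  "tgeod T u v = (THE es. cpath (tree_edges T) u v es \<and>
       (\<forall>es'. cpath (tree_edges T) u v es' \<longrightarrow> length es \<le> length es'))"

definition Ldiam :: "'v set set \<Rightarrow> 'v set set \<Rightarrow> nat" where
  "Ldiam \<Delta> T = Max {length (tgeod T u v) | u v. u \<in> vertices \<Delta> \<and> v \<in> vertices \<Delta>}"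

text \<open>A letter (e, True) is e, a letter (e, False) is e^{-1}.\<close>
type_synonym 'v letter = "('v \<times> 'v) \<times> bool"

definition inv_letter :: "'v letter \<Rightarrow> 'v letter" where
  "inv_letter a = (fst a, \<not> snd a)"

definition inv_word :: "'v letter list \<Rightarrow> 'v letter list" where
  "inv_word w = rev (map inv_letter w)"

definition lpow :: "'v \<times> 'v \<Rightarrow> int \<Rightarrow> 'v letter list" where
  "lpow e k = (if 0 \<le> k then replicate (nat k) (e, True) else replicate (nat (- k)) (e, False))"

definition free_step :: "'v letter list \<Rightarrow> 'v letter list \<Rightarrow> bool" where
  "free_step w w' \<longleftrightarrow> (\<exists>xs ys a. w = xs @ [a, inv_letter a] @ ys \<and> w' = xs @ ys)"

definition freely_equal :: "'v letter list \<Rightarrow> 'v letter list \<Rightarrow> bool" where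
  "freely_equal = (sup free_step free_step\<inverse>\<inverse>)\<^sup>*\<^sup>*"

definition RH :: "'v set set \<Rightarrow> 'v letter list set" where
  "RH \<Delta> =
     {[(e, True), (rev_edge e, True)] | e. e \<in> Edge \<Delta>} \<union>
     {[(e, True), (f, True), (g, True)] | e f g. e \<in> Edge \<Delta> \<and> f \<in> Edge \<Delta> \<and> g \<in> Edge \<Delta> \<and>
         tau e = iota f \<and> tau f = iota g \<and> tau g = iota e} \<union>
     {[(e, False), (f, False), (g, False)] | e f g. e \<in> Edge \<Delta> \<and> f \<in> Edge \<Delta> \<and> g \<in> Edge \<Delta> \<and>
         tau e = iota f \<and> tau f = iota g \<and> tau g = iota e}"

text \<open>Area: least m such that w is freely equal to a product of m conjugates of
relators or their inverses; \<infinity> if there is no such m.\<close>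
definition Area :: "'v letter list set \<Rightarrow> 'v letter list \<Rightarrow> enat" where
  "Area R w = (INF m \<in> {m. \<exists>xs rs. length xs = m \<and> length rs = m \<and>
        (\<forall>r\<in>set rs. r \<in> R \<or> inv_word r \<in> R) \<and>
        freely_equal w (concat (map (\<lambda>(x, r). x @ r @ inv_word x) (zip xs rs)))}. enat m)"

definition pn :: "'v set set \<Rightarrow> int \<Rightarrow> 'v \<Rightarrow> 'v \<Rightarrow> 'v letter list" where
  "pn T n u v = concat (map (\<lambda>e. lpow e n) (tgeod T u v))"

definition we :: "'v set set \<Rightarrow> 'v \<Rightarrow> 'v \<times> 'v \<Rightarrow> 'v letter list" where
  "we T q e = pn T 1 q (iota e) @ [(e, True)] @ pn T 1 (iota e) q"

definition Phi_letter :: "'v set set \<Rightarrow> 'v \<Rightarrow> int \<Rightarrow> 'v letter \<Rightarrow> 'v letter list" where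
  "Phi_letter T q n a =
     (let w = pn T n q (iota (fst a)) @ lpow (fst a) (n + 1) @ pn T n (tau (fst a)) q
      in if snd a then w else inv_word w)"

definition Phi :: "'v set set \<Rightarrow> 'v \<Rightarrow> int \<Rightarrow> 'v letter list \<Rightarrow> 'v letter list" where
  "Phi T q n w = concat (map (Phi_letter T q n) w)"

end

theory Submission
  imports Defs
begin

lemma inv_letter_inv[simp]: "inv_letter (inv_letter a) = a"
  by (simp add: inv_letter_def)

lemma inv_word_nil[simp]: "inv_word [] = []" by (simp add: inv_word_def)
lemma inv_word_append[simp]: "inv_word (a @ b) = inv_word b @ inv_word a"
  by (simp add: inv_word_def)
lemma inv_word_cons[simp]: "inv_word (a # b) = inv_word b @ [inv_letter a]"
  by (simp add: inv_word_def)
lemma inv_word_inv[simp]: "inv_word (inv_word w) = w"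
  by (simp add: inv_word_def rev_map[symmetric] comp_def)

lemma free_step_cong: "free_step a b \<Longrightarrow> free_step (x@a@y) (x@b@y)"
  unfolding free_step_def
  by (clarify, rule exI[of _ "x@_"], rule exI[of _ "_@y"], auto)

lemma fe_cong: "freely_equal a b \<Longrightarrow> freely_equal (x@a@y) (x@b@y)"
  unfolding freely_equal_def
proof (induction rule: rtranclp_induct)
  case base then show ?case by simp
next
  case (step b c)
  then show ?case
    by (auto intro: rtranclp.rtrancl_into_rtrancl free_step_cong)
qed

lemma fe_refl[simp]: "freely_equal a a" unfolding freely_equal_def by simp

lemma fe_trans: "freely_equal a b \<Longrightarrow> freely_equal b c \<Longrightarrow> freely_equal a c"
  unfolding freely_equal_def by (rule rtranclp_trans)

lemma fe_sym: "freely_equal a b \<Longrightarrow> freely_equal b a"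
  unfolding freely_equal_def
proof (induction rule: rtranclp_induct)
  case base then show ?case by simp
next
  case (step b c)
  then have "(sup free_step free_step\<inverse>\<inverse>) c b" by auto
  then show ?case using step(3) by (rule converse_rtranclp_into_rtranclp)
qed

lemma fe_cancel1: "freely_equal (x @ [a, inv_letter a] @ y) (x @ y)"
proof -
  have "free_step (x @ [a, inv_letter a] @ y) (x @ y)"
    unfolding free_step_def by blast
  then show ?thesis unfolding freely_equal_def by (intro r_into_rtranclp) simp
qed

lemma fe_cancel: "freely_equal (x @ w @ inv_word w @ y) (x @ y)"
proof (induction w arbitrary: x y)
  case Nil then show ?case by simp
next
  case (Cons a w)
  have "freely_equal ((x@[a]) @ w @ inv_word w @ ([inv_letter a] @ y)) ((x@[a]) @ ([inv_letter a] @ y))"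
    by (rule Cons)
  then have "freely_equal (x @ (a # w) @ inv_word (a#w) @ y) (x @ [a, inv_letter a] @ y)" by simp
  then show ?case using fe_cancel1 fe_trans by blast
qed

lemma fe_cancel2: "freely_equal (x @ inv_word w @ w @ y) (x @ y)"
  using fe_cancel[of x "inv_word w" y] by simp

lemma free_step_inv: "free_step a b \<Longrightarrow> free_step (inv_word a) (inv_word b)"
proof -
  assume "free_step a b"
  then obtain xs ys c where h: "a = xs @ [c, inv_letter c] @ ys" "b = xs @ ys"
    unfolding free_step_def by blast
  have "inv_word a = inv_word ys @ [c, inv_letter c] @ inv_word xs"
    using h by simp
  moreover have "inv_word b = inv_word ys @ inv_word xs" using h by simp
  ultimately show ?thesis unfolding free_step_def by blast
qed

lemma fe_inv: "freely_equal a b \<Longrightarrow> freely_equal (inv_word a) (inv_word b)"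
  unfolding freely_equal_def
proof (induction rule: rtranclp_induct)
  case base then show ?case by simp
next
  case (step b c)
  then show ?case
    by (auto intro: rtranclp.rtrancl_into_rtrancl free_step_inv)
qed


definition wit :: "'v letter list set \<Rightarrow> 'v letter list \<Rightarrow> nat \<Rightarrow> bool" where
  "wit R w m \<longleftrightarrow> (\<exists>xs rs. length xs = m \<and> length rs = m \<and>
        (\<forall>r\<in>set rs. r \<in> R \<or> inv_word r \<in> R) \<and>
        freely_equal w (concat (map (\<lambda>(x, r). x @ r @ inv_word x) (zip xs rs))))"

definition DD :: "'v letter list set \<Rightarrow> 'v letter list \<Rightarrow> nat \<Rightarrow> bool" where
  "DD R w a \<longleftrightarrow> (\<exists>m\<le>a. wit R w m)"

lemma Area_wit: "Area R w = (INF m \<in> {m. wit R w m}. enat m)"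
  unfolding Area_def wit_def by simp

lemma DD_Area: "DD R w a \<Longrightarrow> Area R w \<le> enat a"
  unfolding DD_def Area_wit
  by (auto intro: INF_lower2)

lemma Area_DD: assumes "Area R w = enat a" shows "DD R w a"
proof -
  let ?S = "{m. wit R w m}"
  have ne: "?S \<noteq> {}"
  proof
    assume "?S = {}"
    then have "Area R w = top" by (simp only: Area_wit INF_empty)
    then have "Area R w = \<infinity>" by (simp add: top_enat_def)
    with assms show False by simp
  qed
  then obtain m0 where m0: "wit R w m0" by blast
  let ?l = "LEAST m. wit R w m"
  have l: "wit R w ?l" using m0 by (rule LeastI)
  have "Area R w = enat ?l"
    unfolding Area_wit
  proof (rule antisym)
    show "(INF m\<in>?S. enat m) \<le> enat ?l" using l by (auto intro: INF_lower2)
    show "enat ?l \<le> (INF m\<in>?S. enat m)"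
      by (rule INF_greatest) (auto intro: Least_le)
  qed
  with assms have "a = ?l" by simp
  with l show ?thesis unfolding DD_def by auto
qed

lemma DD_mono: "DD R w a \<Longrightarrow> a \<le> b \<Longrightarrow> DD R w b"
  unfolding DD_def using le_trans by blast

lemma DD_nil: "DD R [] 0"
  unfolding DD_def wit_def by auto

lemma DD_free: "freely_equal w w' \<Longrightarrow> DD R w' a \<Longrightarrow> DD R w a"
  unfolding DD_def wit_def using fe_trans by blast

lemma DD_rel: assumes h: "r \<in> R \<or> inv_word r \<in> R" shows "DD R r 1"
proof -
  have "wit R r 1" unfolding wit_def using h by (intro exI[of _ "[[]]"] exI[of _ "[r]"]) simp
  then show ?thesis unfolding DD_def by blast
qed

lemma fe_app: "freely_equal a a' \<Longrightarrow> freely_equal b b' \<Longrightarrow> freely_equal (a@b) (a'@b')"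
proof -
  assume "freely_equal a a'" "freely_equal b b'"
  then have "freely_equal ([]@a@b) ([]@a'@b)" "freely_equal (a'@b@[]) (a'@b'@[])"
    using fe_cong by blast+
  then show ?thesis using fe_trans by simp
qed

lemma DD_app: "DD R u a \<Longrightarrow> DD R v b \<Longrightarrow> DD R (u@v) (a+b)"
proof -
  assume "DD R u a" "DD R v b"
  then obtain m1 m2 xs1 rs1 xs2 rs2 where
    h: "m1 \<le> a" "m2 \<le> b" "length xs1 = m1" "length rs1 = m1" "length xs2 = m2" "length rs2 = m2"
      "\<forall>r\<in>set rs1. r \<in> R \<or> inv_word r \<in> R" "\<forall>r\<in>set rs2. r \<in> R \<or> inv_word r \<in> R"
      "freely_equal u (concat (map (\<lambda>(x, r). x @ r @ inv_word x) (zip xs1 rs1)))"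
      "freely_equal v (concat (map (\<lambda>(x, r). x @ r @ inv_word x) (zip xs2 rs2)))"
    unfolding DD_def wit_def by blast
  have "freely_equal (u@v) (concat (map (\<lambda>(x, r). x @ r @ inv_word x) (zip (xs1@xs2) (rs1@rs2))))"
    using h fe_app by (simp add: zip_append)
  then have "wit R (u@v) (m1+m2)" unfolding wit_def
    by (intro exI[of _ "xs1@xs2"] exI[of _ "rs1@rs2"]) (use h in auto)
  then show ?thesis unfolding DD_def using h by (intro exI[of _ "m1+m2"]) auto
qed

lemma fe_conj_concat:
  "freely_equal (x @ concat (map (\<lambda>(y, r). y @ r @ inv_word y) L) @ inv_word x)
                (concat (map (\<lambda>(y, r). (x@y) @ r @ inv_word (x@y)) L))"
proof (induction L)
  case Nil
  then show ?case using fe_cancel[of "[]" x "[]"] by simp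
next
  case (Cons p L)
  obtain y r where p: "p = (y, r)" by fastforce
  let ?C = "concat (map (\<lambda>(y, r). y @ r @ inv_word y) L)"
  let ?C' = "concat (map (\<lambda>(y, r). (x@y) @ r @ inv_word (x@y)) L)"
  let ?P = "x @ y @ r @ inv_word y"
  have 1: "freely_equal (?P @ inv_word x @ x @ (?C @ inv_word x)) (?P @ (?C @ inv_word x))"
    by (rule fe_cancel2)
  have 2: "freely_equal ((?P @ inv_word x) @ (x @ ?C @ inv_word x) @ []) ((?P @ inv_word x) @ ?C' @ [])"
    using Cons fe_cong by blast
  have "freely_equal (?P @ ?C @ inv_word x) ((?P @ inv_word x) @ ?C')"
    using fe_trans[OF fe_sym[OF 1]] 2 by simp
  then show ?case using p by simp
qed

lemma zip_conj_eq: "concat (map (\<lambda>(y, r). y @ r @ inv_word y) (zip (map ((@) x) xs) rs))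
   = concat (map (\<lambda>(y, r). (x@y) @ r @ inv_word (x@y)) (zip xs rs))"
proof (induction xs arbitrary: rs)
  case Nil then show ?case by simp
next
  case (Cons a xs) then show ?case by (cases rs) auto
qed

lemma DD_conj: "DD R w a \<Longrightarrow> DD R (x @ w @ inv_word x) a"
proof -
  assume "DD R w a"
  then obtain m xs rs where
    h: "m \<le> a" "length xs = m" "length rs = m"
      "\<forall>r\<in>set rs. r \<in> R \<or> inv_word r \<in> R"
      "freely_equal w (concat (map (\<lambda>(x, r). x @ r @ inv_word x) (zip xs rs)))"
    unfolding DD_def wit_def by blast
  have "freely_equal (x @ w @ inv_word x) (x @ (concat (map (\<lambda>(x, r). x @ r @ inv_word x) (zip xs rs))) @ inv_word x)"
    using h(5) fe_cong by blast
  moreover have "freely_equal (x @ (concat (map (\<lambda>(x, r). x @ r @ inv_word x) (zip xs rs))) @ inv_word x) (concat (map (\<lambda>(y, r). (x@y) @ r @ inv_word (x@y)) (zip xs rs)))"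
    by (rule fe_conj_concat)
  ultimately have "freely_equal (x @ w @ inv_word x) (concat (map (\<lambda>(y, r). (x@y) @ r @ inv_word (x@y)) (zip xs rs)))"
    by (rule fe_trans)
  then have f: "freely_equal (x @ w @ inv_word x) (concat (map (\<lambda>(y, r). y @ r @ inv_word y) (zip (map ((@) x) xs) rs)))"
    unfolding zip_conj_eq .
  have "wit R (x @ w @ inv_word x) m" unfolding wit_def
    by (intro exI[of _ "map ((@) x) xs"] exI[of _ rs]) (use h f in auto)
  then show ?thesis unfolding DD_def using h by auto
qed

lemma inv_word_concat: "inv_word (concat L) = concat (rev (map inv_word L))"
  by (induction L) auto

lemma DD_inv: "DD R w a \<Longrightarrow> DD R (inv_word w) a"
proof -
  assume "DD R w a"
  then obtain m xs rs where
    h: "m \<le> a" "length xs = m" "length rs = m"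
      "\<forall>r\<in>set rs. r \<in> R \<or> inv_word r \<in> R"
      "freely_equal w (concat (map (\<lambda>(x, r). x @ r @ inv_word x) (zip xs rs)))"
    unfolding DD_def wit_def by blast
  have eq: "inv_word (concat (map (\<lambda>(x, r). x @ r @ inv_word x) (zip xs rs)))
      = concat (map (\<lambda>(x, r). x @ r @ inv_word x) (zip (rev xs) (rev (map inv_word rs))))"
    using h(2,3)
    by (simp add: inv_word_concat rev_map[symmetric] zip_rev zip_map2 comp_def case_prod_beta)
  have f: "freely_equal (inv_word w) (concat (map (\<lambda>(x, r). x @ r @ inv_word x) (zip (rev xs) (rev (map inv_word rs)))))"
    using fe_inv[OF h(5)] eq by simp
  have "wit R (inv_word w) m" unfolding wit_def
    by (intro exI[of _ "rev xs"] exI[of _ "rev (map inv_word rs)"]) (use h f in auto)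
  then show ?thesis unfolding DD_def using h by auto
qed

definition EE :: "'v letter list set \<Rightarrow> 'v letter list \<Rightarrow> 'v letter list \<Rightarrow> nat \<Rightarrow> bool" where
  "EE R w w' a \<longleftrightarrow> DD R (w @ inv_word w') a"

lemma EE_DD: "EE R w [] a \<longleftrightarrow> DD R w a" unfolding EE_def by simp

lemma EE_free: "freely_equal w w' \<Longrightarrow> EE R w w' 0"
proof -
  assume "freely_equal w w'"
  then have "freely_equal (w @ inv_word w') (w' @ inv_word w')" using fe_cong[of w w' "[]"] by simp
  moreover have "freely_equal (w' @ inv_word w') []" using fe_cancel[of "[]" w' "[]"] by simp
  ultimately show ?thesis unfolding EE_def using DD_free DD_nil fe_trans by blast
qed

lemma EE_refl: "EE R w w 0" by (rule EE_free) simp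

lemma EE_trans: "EE R w1 w2 a \<Longrightarrow> EE R w2 w3 b \<Longrightarrow> EE R w1 w3 (a+b)"
proof -
  assume "EE R w1 w2 a" "EE R w2 w3 b"
  then have "DD R ((w1 @ inv_word w2) @ (w2 @ inv_word w3)) (a+b)" unfolding EE_def by (rule DD_app)
  moreover have "freely_equal (w1 @ inv_word w3) ((w1 @ inv_word w2) @ (w2 @ inv_word w3))"
    using fe_sym[OF fe_cancel2[of w1 w2 "inv_word w3"]] by simp
  ultimately show ?thesis unfolding EE_def using DD_free by blast
qed

lemma EE_sym: "EE R w w' a \<Longrightarrow> EE R w' w a"
  unfolding EE_def using DD_inv by fastforce

lemma EE_cong: "EE R w w' a \<Longrightarrow> EE R (x@w@y) (x@w'@y) a"
proof -
  assume "EE R w w' a"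
  then have "DD R (x @ (w @ inv_word w') @ inv_word x) a" unfolding EE_def by (rule DD_conj)
  moreover have "freely_equal ((x@w@y) @ inv_word (x@w'@y)) (x @ (w @ inv_word w') @ inv_word x)"
    using fe_cancel[of "x@w" y "inv_word w' @ inv_word x"] by simp
  ultimately show ?thesis unfolding EE_def using DD_free by blast
qed

lemma EE_cong': "EE R w w' a \<Longrightarrow> X = x@w@y \<Longrightarrow> X' = x@w'@y \<Longrightarrow> EE R X X' a"
  using EE_cong by blast

lemma EE_mono: "EE R w w' a \<Longrightarrow> a \<le> b \<Longrightarrow> EE R w w' b"
  unfolding EE_def using DD_mono by blast

lemma DD_rot: "DD R (x@y) a \<Longrightarrow> DD R (y@x) a"
proof -
  assume "DD R (x@y) a"
  then have "DD R (inv_word x @ (x@y) @ inv_word (inv_word x)) a" by (rule DD_conj)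
  moreover have "freely_equal (y@x) (inv_word x @ (x@y) @ inv_word (inv_word x))"
    using fe_sym[OF fe_cancel2[of "[]" x "y@x"]] by simp
  ultimately show ?thesis using DD_free by blast
qed

lemma DD_pairs: "DD R [a, b] 1 \<Longrightarrow> DD R (replicate m a @ replicate m b) m"
proof (induction m)
  case 0 then show ?case using DD_nil by simp
next
  case (Suc m)
  have "EE R (replicate m a @ [a, b] @ replicate m b) (replicate m a @ [] @ replicate m b) 1"
    using Suc.prems EE_cong EE_DD by metis
  moreover have "EE R (replicate m a @ replicate m b) [] m" using Suc EE_DD by blast
  ultimately have ee: "EE R (replicate m a @ [a, b] @ replicate m b) [] (1 + m)"
    using EE_trans by fastforce
  have eq: "replicate (Suc m) a @ replicate (Suc m) b = replicate m a @ [a, b] @ replicate m b"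
    by (simp add: replicate_append_same[symmetric])
  from ee have "DD R (replicate m a @ [a, b] @ replicate m b) (1 + m)" by (simp only: EE_DD)
  then show ?case unfolding eq by simp
qed


lemma cpath_append: "cpath E u v (xs@ys) \<longleftrightarrow> (\<exists>w. cpath E u w xs \<and> cpath E w v ys)"
  by (induction xs arbitrary: u) auto

lemma cpath_last: "cpath E u v es \<Longrightarrow> last (u # map snd es) = v"
  by (induction es arbitrary: u) auto

lemma cpath_end_unique: "cpath E u w xs \<Longrightarrow> cpath E u w' xs \<Longrightarrow> w = w'"
  using cpath_last by metis

lemma cpath_rev:
  assumes sym: "\<And>e. e \<in> E \<Longrightarrow> prod.swap e \<in> E"
  shows "cpath E u v es \<Longrightarrow> cpath E v u (rev (map prod.swap es))"
proof (induction es arbitrary: u)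
  case Nil then show ?case by simp
next
  case (Cons e es)
  then have h: "e \<in> E" "fst e = u" "cpath E (snd e) v es" by auto
  have "cpath E v (snd e) (rev (map prod.swap es))" using Cons.IH h(3) by blast
  moreover have "cpath E (snd e) u [prod.swap e]" using h sym by auto
  ultimately show ?case by (auto simp: cpath_append)
qed

lemma cpath_fst: "cpath E u v es \<Longrightarrow> map fst es = butlast (u # map snd es)"
  by (induction es arbitrary: u) auto

lemma cpath_take_drop:
  "cpath E u v es \<Longrightarrow> i \<le> length es \<Longrightarrow>
     cpath E u ((u # map snd es)!i) (take i es) \<and> cpath E ((u # map snd es)!i) v (drop i es)"
proof (induction es arbitrary: u i)
  case Nil then show ?case by simp
next
  case (Cons e es)
  show ?case
  proof (cases i)
    case 0 then show ?thesis using Cons by simp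
  next
    case (Suc j)
    then show ?thesis using Cons.prems Cons.IH[of "snd e" j] by auto
  qed
qed

definition geod :: "('v \<times> 'v) set \<Rightarrow> 'v \<Rightarrow> 'v \<Rightarrow> ('v \<times> 'v) list \<Rightarrow> bool" where
  "geod E u v es \<longleftrightarrow> cpath E u v es \<and> (\<forall>es'. cpath E u v es' \<longrightarrow> length es \<le> length es')"

lemma geod_exists: assumes "cpath E u v es" shows "\<exists>P. geod E u v P"
proof -
  from ex_has_least_nat[of "cpath E u v" es length] assms
  obtain P where "cpath E u v P" "\<forall>y. cpath E u v y \<longrightarrow> length P \<le> length y" by blast
  then have "geod E u v P" unfolding geod_def by blast
  then show ?thesis ..
qed

lemma geod_simple: assumes g: "geod E u v es" shows "distinct (u # map snd es)"
proof (rule ccontr)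
  let ?vs = "u # map snd es"
  assume nd: "\<not> distinct ?vs"
  have "\<exists>i<length ?vs. \<exists>j<length ?vs. i \<noteq> j \<and> ?vs!i = ?vs!j"
    using nd unfolding distinct_conv_nth by blast
  then obtain i j where h: "i < length ?vs" "j < length ?vs" "i \<noteq> j" "?vs!i = ?vs!j"
    by blast
  have "\<exists>i j. i < j \<and> j \<le> length es \<and> ?vs!i = ?vs!j"
  proof (cases "i < j")
    case True
    moreover have "j \<le> length es" using h(2) by simp
    ultimately show ?thesis using h(4) by blast
  next
    case False then have "j < i" using h(3) by simp
    moreover have "i \<le> length es" using h(1) by simp
    moreover have "?vs!j = ?vs!i" using h(4) by (rule sym)
    ultimately show ?thesis by blast
  qed
  then obtain i j where ij: "i < j" "j \<le> length es" "?vs!i = ?vs!j" by blast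
  have c: "cpath E u v es" using g unfolding geod_def by blast
  have il: "i \<le> length es" using ij by simp
  have td_i: "cpath E u (?vs!i) (take i es) \<and> cpath E (?vs!i) v (drop i es)"
    by (rule cpath_take_drop[OF c il])
  have td_j: "cpath E u (?vs!j) (take j es) \<and> cpath E (?vs!j) v (drop j es)"
    by (rule cpath_take_drop[OF c ij(2)])
  have c1: "cpath E u (?vs!j) (take i es)"
    by (subst ij(3)[symmetric]) (use td_i in blast)
  have c2: "cpath E (?vs!j) v (drop j es)" using td_j by blast
  have "cpath E u v (take i es @ drop j es)" unfolding cpath_append using c1 c2 by blast
  with g have "length es \<le> length (take i es @ drop j es)" unfolding geod_def by blast
  moreover have "length (take i es @ drop j es) < length es" using ij by simp
  ultimately show False by simp
qed


lemma cpath_appI: "cpath E u w xs \<Longrightarrow> cpath E w v ys \<Longrightarrow> cpath E u v (xs@ys)"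
  by (induction xs arbitrary: u) auto

lemma cpath_appE: "cpath E u v (xs@ys) \<Longrightarrow> (\<And>w. cpath E u w xs \<Longrightarrow> cpath E w v ys \<Longrightarrow> P) \<Longrightarrow> P"
  by (induction xs arbitrary: u) auto

lemma geod_split: "geod E u v (xs@ys) \<Longrightarrow> cpath E u w xs \<Longrightarrow> geod E u w xs \<and> geod E w v ys"
proof -
  assume g: "geod E u v (xs@ys)" and c: "cpath E u w xs"
  from g have "cpath E u v (xs@ys)" unfolding geod_def by (rule conjunct1)
  then obtain w' where w': "cpath E u w' xs" "cpath E w' v ys"
    by (rule cpath_appE)
  have "w' = w" using w'(1) c by (rule cpath_end_unique)
  with w' have cy: "cpath E w v ys" by simp
  have "geod E u w xs" unfolding geod_def
  proof (intro conjI allI impI)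
    show "cpath E u w xs" by (rule c)
    fix es' assume "cpath E u w es'"
    then have "cpath E u v (es'@ys)" using cy by (rule cpath_appI)
    then have "length (xs@ys) \<le> length (es'@ys)" using g unfolding geod_def by blast
    then show "length xs \<le> length es'" by simp
  qed
  moreover have "geod E w v ys" unfolding geod_def
  proof (intro conjI allI impI)
    show "cpath E w v ys" by (rule cy)
    fix es' assume "cpath E w v es'"
    then have "cpath E u v (xs@es')" using c cpath_appI by metis
    then have "length (xs@ys) \<le> length (xs@es')" using g unfolding geod_def by blast
    then show "length ys \<le> length es'" by simp
  qed
  ultimately show ?thesis by blast
qed

lemma geod_rev:
  assumes sym: "\<And>e. e \<in> E \<Longrightarrow> prod.swap e \<in> E"
    and g: "geod E u v es"
  shows "geod E v u (rev (map prod.swap es))"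
proof -
  have c: "cpath E u v es" and m: "\<forall>es'. cpath E u v es' \<longrightarrow> length es \<le> length es'"
    using g unfolding geod_def by blast+
  show ?thesis unfolding geod_def
  proof (intro conjI allI impI)
    show "cpath E v u (rev (map prod.swap es))" using cpath_rev[OF sym c] by blast
    fix es' assume "cpath E v u es'"
    then have "cpath E u v (rev (map prod.swap es'))" using cpath_rev[OF sym] by blast
    then have "length es \<le> length (rev (map prod.swap es'))" using m by blast
    then show "length (rev (map prod.swap es)) \<le> length es'" by simp
  qed
qed

lemma map_fst_rev_swap: "map fst (rev (map prod.swap X)) = rev (map snd X)"
  by (induction X) auto

lemma geod_unique:
  assumes sym: "\<And>e. e \<in> E \<Longrightarrow> prod.swap e \<in> E"
    and acyc: "\<not> (\<exists>u es. 3 \<le> length es \<and> cpath E u u es \<and> distinct (map fst es))"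
  shows "geod E u v P \<Longrightarrow> geod E u v Q \<Longrightarrow> P = Q"
proof (induction P arbitrary: u Q)
  case Nil
  from Nil.prems(1) have "u = v" by (simp add: geod_def)
  then have cn: "cpath E u v []" by simp
  from Nil.prems(2) have "\<forall>es'. cpath E u v es' \<longrightarrow> length Q \<le> length es'" unfolding geod_def by blast
  from this[rule_format, OF cn] show ?case by simp
next
  case (Cons p P)
  have gP: "geod E u v (p#P)" and gQ: "geod E u v Q" by fact+
  have l1: "length (p#P) \<le> length Q" using gP gQ unfolding geod_def by blast
  have l2: "length Q \<le> length (p#P)" using gP gQ unfolding geod_def by blast
  from l1 l2 have lenQ: "length Q = length (p#P)" by simp
  then obtain q Q' where Qd: "Q = q # Q'" by (cases Q) auto
  have cP: "cpath E u v (p#P)" using gP unfolding geod_def by blast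
  have cQ: "cpath E u v (q#Q')" using gQ Qd unfolding geod_def by blast
  have gQ': "geod E u v (q#Q')" using gQ Qd by simp
  show "p # P = Q"
  proof (cases "p = q")
    case True
    have c1: "cpath E u (snd p) [p]" using cP by simp
    have "geod E (snd p) v P" using geod_split[of E u v "[p]" P "snd p"] gP c1 by simp
    moreover have "geod E (snd p) v Q'" using geod_split[of E u v "[q]" Q' "snd p"] gQ' c1 True by simp
    ultimately have "P = Q'" using Cons.IH by blast
    then show ?thesis using True Qd by simp
  next
    case False
    define vq where "vq = map snd (q#Q')"
    have dP: "distinct (u # map snd (p#P))" using geod_simple[OF gP] .
    have dQ: "distinct (u # vq)" using geod_simple[OF gQ'] unfolding vq_def .
    have lastP: "snd (last (p#P)) = v" using cpath_last[OF cP] by (auto simp: last_map split: if_splits)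
    have lastQ: "snd (last (q#Q')) = v" using cpath_last[OF cQ] by (auto simp: last_map split: if_splits)
    have "last (q#Q') \<in> set (q#Q')" by (rule last_in_set) simp
    then have "snd (last (q#Q')) \<in> set vq" unfolding vq_def set_map by (rule imageI)
    then have vin: "v \<in> set vq" using lastQ by simp
    have "last (p#P) \<in> set (p#P)" by (rule last_in_set) simp
    then have "\<exists>x\<in>set (p#P). snd x \<in> set vq" using lastP vin by (intro bexI[of _ "last (p#P)"]) simp_all
    then obtain P1 p' P2 where sp: "p#P = P1 @ p' # P2" "snd p' \<in> set vq" "\<forall>y\<in>set P1. snd y \<notin> set vq"
      by (rule split_list_first_propE) blast
    have "snd p' \<in> snd ` set (q#Q')" using sp(2) unfolding vq_def by simp
    then obtain q' where q': "q' \<in> set (q#Q')" "snd q' = snd p'" by (metis imageE)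
    then obtain Q1 Q2 where sq: "q#Q' = Q1 @ q' # Q2" by (meson split_list)
    let ?C = "(P1 @ [p']) @ rev (map prod.swap (Q1 @ [q']))"
    have cP': "cpath E u v ((P1 @ [p']) @ P2)" using cP unfolding sp(1) by simp
    then obtain w where w: "cpath E u w (P1 @ [p'])" "cpath E w v P2"
      by (rule cpath_appE)
    have wp: "w = snd p'" using cpath_last[OF w(1)] by simp
    have cQ': "cpath E u v ((Q1 @ [q']) @ Q2)" using cQ unfolding sq by simp
    then obtain w' where w': "cpath E u w' (Q1 @ [q'])" "cpath E w' v Q2"
      by (rule cpath_appE)
    have wq: "w' = snd q'" using cpath_last[OF w'(1)] by simp
    have c2: "cpath E w u (rev (map prod.swap (Q1 @ [q'])))"
      using cpath_rev[OF sym w'(1)] wp wq q'(2) by simp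
    have cyc: "cpath E u u ?C" using w(1) c2 by (rule cpath_appI)
    have f1: "map fst (P1 @ [p']) = u # map snd P1" using cpath_fst[OF w(1)] by simp
    have mC: "map fst ?C = (u # map snd P1) @ rev (map snd (Q1 @ [q']))"
    proof -
      have "map fst ?C = map fst (P1@[p']) @ map fst (rev (map prod.swap (Q1 @ [q'])))"
        by (rule map_append)
      then show ?thesis by (simp only: f1 map_fst_rev_swap)
    qed
    have "distinct ((u # map snd P1) @ map snd (p' # P2))" using dP unfolding sp(1) by simp
    then have dP1: "distinct (u # map snd P1)" using distinct_append by blast
    have "distinct (u # map snd (Q1 @ [q']) @ map snd Q2)" using dQ unfolding vq_def sq by simp
    then have dQ1: "distinct (map snd (Q1 @ [q']))" by simp
    have sQ1: "set (map snd (Q1 @ [q'])) \<subseteq> set vq" unfolding vq_def sq by auto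
    have uQ: "u \<notin> set vq" using dQ by simp
    have disj: "set (u # map snd P1) \<inter> set (map snd (Q1 @ [q'])) = {}"
      using sQ1 uQ sp(3) by auto
    have dC: "distinct (map fst ?C)"
      unfolding mC using dP1 dQ1 disj by (simp only: distinct_append distinct_rev set_rev)
    have len3: "3 \<le> length ?C"
    proof (rule ccontr)
      assume n3: "\<not> 3 \<le> length ?C"
      have "length ?C = length P1 + length Q1 + 2" by simp
      with n3 have "length P1 + length Q1 = 0" by linarith
      then have e: "P1 = []" "Q1 = []" by simp_all
      then have "p' = p" "q' = q" using sp(1) sq by auto
      moreover have "fst p = u" "fst q = u" using cP cQ by auto
      ultimately have "p = q" using q'(2) by (simp add: prod_eq_iff)
      with False show False by simp
    qed
    have "\<exists>u es. 3 \<le> length es \<and> cpath E u u es \<and> distinct (map fst es)"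
      using cyc dC len3 by blast
    with acyc show ?thesis by simp
  qed
qed


definition Pf :: "('v \<times> 'v) list \<Rightarrow> int \<Rightarrow> 'v letter list" where
  "Pf ps n = concat (map (\<lambda>e. lpow e n) ps)"
definition Pb :: "('v \<times> 'v) list \<Rightarrow> int \<Rightarrow> 'v letter list" where
  "Pb ps n = concat (map (\<lambda>e. lpow e n) (rev (map prod.swap ps)))"

lemma Pf_simps[simp]: "Pf [] n = []" "Pf (xs@ys) n = Pf xs n @ Pf ys n" "Pf (f#xs) n = lpow f n @ Pf xs n"
  by (simp_all add: Pf_def)
lemma Pb_simps[simp]: "Pb [] n = []" "Pb (xs@[f]) n = lpow (prod.swap f) n @ Pb xs n"
  "Pb (f#xs) n = Pb xs n @ lpow (prod.swap f) n"
  by (simp_all add: Pb_def)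

lemma Phi_append[simp]: "Phi T q n (xs@ys) = Phi T q n xs @ Phi T q n ys"
  by (simp add: Phi_def)
lemma Phi_nil[simp]: "Phi T q n [] = []" by (simp add: Phi_def)
lemma Phi_cons: "Phi T q n (a#ys) = Phi_letter T q n a @ Phi T q n ys"
  by (simp add: Phi_def)

lemma lpow1: "lpow e 1 = [(e, True)]" by (simp add: lpow_def)

lemma concat_lpow1: "concat (map (\<lambda>e. lpow e 1) ps) = map (\<lambda>f. (f, True)) ps"
  by (induction ps) (auto simp: lpow1)

lemma Edge_swap: "f \<in> Edge \<Delta> \<Longrightarrow> prod.swap f \<in> Edge \<Delta>"
  unfolding Edge_def by (auto simp: insert_commute)

lemma RH_edge: "e \<in> Edge \<Delta> \<Longrightarrow> [(e, True), (prod.swap e, True)] \<in> RH \<Delta>"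
  unfolding RH_def by blast

lemma lpow_cancel:
  assumes f: "f \<in> Edge \<Delta>"
  shows "DD (RH \<Delta>) (lpow (prod.swap f) k @ lpow f k) (nat \<bar>k\<bar>)"
proof -
  have r1: "[(prod.swap f, True), (f, True)] \<in> RH \<Delta>"
    using RH_edge[OF Edge_swap[OF f]] by simp
  have r2: "[(f, True), (prod.swap f, True)] \<in> RH \<Delta>" using RH_edge[OF f] .
  show ?thesis
  proof (cases "0 \<le> k")
    case True
    have "DD (RH \<Delta>) [(prod.swap f, True), (f, True)] 1" using r1 by (intro DD_rel) simp
    from DD_pairs[OF this, of "nat k"] True show ?thesis by (simp add: lpow_def)
  next
    case False
    have "inv_word [(prod.swap f, False), (f, False)] = [(f, True), (prod.swap f, True)]"
      by (simp add: inv_letter_def)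
    then have "DD (RH \<Delta>) [(prod.swap f, False), (f, False)] 1" using r2 by (intro DD_rel) simp
    from DD_pairs[OF this, of "nat (-k)"] False show ?thesis by (simp add: lpow_def)
  qed
qed

lemma telescope:
  assumes "\<forall>f\<in>set ps. f \<in> Edge \<Delta>"
  shows "DD (RH \<Delta>) (Pb ps n @ Pf ps n) (length ps * nat \<bar>n\<bar>)"
  using assms
proof (induction ps)
  case Nil then show ?case using DD_nil by simp
next
  case (Cons f ps)
  have fE: "f \<in> Edge \<Delta>" using Cons.prems by simp
  have "EE (RH \<Delta>) (lpow (prod.swap f) n @ lpow f n) [] (nat \<bar>n\<bar>)"
    unfolding EE_DD by (rule lpow_cancel[OF fE])
  then have "EE (RH \<Delta>) (Pb (f#ps) n @ Pf (f#ps) n) (Pb ps n @ [] @ Pf ps n) (nat \<bar>n\<bar>)"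
    by (rule EE_cong') simp_all
  moreover have "EE (RH \<Delta>) (Pb ps n @ Pf ps n) [] (length ps * nat \<bar>n\<bar>)"
    unfolding EE_DD using Cons by simp
  ultimately have "EE (RH \<Delta>) (Pb (f#ps) n @ Pf (f#ps) n) [] (nat \<bar>n\<bar> + length ps * nat \<bar>n\<bar>)"
    using EE_trans by fastforce
  then show ?case unfolding EE_DD by simp
qed

lemma lpow_step: "freely_equal (lpow e (k+1) @ inv_word (lpow e k)) [(e, True)]"
proof (cases "0 \<le> k")
  case True
  then have "lpow e (k+1) = [(e, True)] @ lpow e k"
    by (simp add: lpow_def nat_add_distrib)
  then show ?thesis using fe_cancel[of "[(e, True)]" "lpow e k" "[]"] by simp
next
  case False
  have n1: "nat (-k) = Suc (nat (-(k+1)))" using False by simp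
  have l1: "lpow e (k+1) = replicate (nat (-(k+1))) (e, False)"
    using False by (cases "k+1 = 0") (auto simp: lpow_def)
  have "lpow e k = replicate (nat (-k)) (e, False)" using False by (simp add: lpow_def)
  also have "... = (e, False) # replicate (nat (-(k+1))) (e, False)" by (simp only: n1 replicate_Suc)
  finally have "lpow e k = (e, False) # lpow e (k+1)" using l1 by simp
  then have "inv_word (lpow e k) = inv_word (lpow e (k+1)) @ [(e, True)]"
    by (simp add: inv_letter_def)
  then show ?thesis using fe_cancel[of "[]" "lpow e (k+1)" "[(e, True)]"] by simp
qed

lemma ereal_enat_bound: "ereal_of_enat x \<le> ereal c \<Longrightarrow> \<exists>a. x = enat a \<and> real a \<le> c"
  by (cases x) auto

lemma cpath_set: "cpath E u v es \<Longrightarrow> set es \<subseteq> E"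
  by (induction es arbitrary: u) auto


theorem lemma4p9:
  fixes \<Delta> :: "('v::finite) set set" and T :: "'v set set" and q :: 'v and K :: real
  assumes "simplicial_complex \<Delta>"
    and "flag \<Delta>"
    and "simply_connected (realization \<Delta>)"
    and "spanning_tree \<Delta> T"
    and "q \<in> vertices \<Delta>"
    and "\<forall>e\<in>Edge \<Delta>. \<forall>n::int.
           ereal_of_enat (Area (RH \<Delta>) (pn T n q (iota e) @ lpow e n @ pn T n (tau e) q))
             \<le> ereal (K * (real_of_int \<bar>n\<bar>)\<^sup>2)"
  shows "\<forall>e\<in>Edge \<Delta>. \<forall>n::int.
           ereal_of_enat (Area (RH \<Delta>) (Phi T q (n + 1) [(e, True)] @ inv_word (Phi T q n (we T q e))))
             \<le> ereal (2 * K * (real_of_int \<bar>n\<bar>)\<^sup>2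
                 + (3 * (real (Ldiam \<Delta> T))\<^sup>2 + 2 * real (Ldiam \<Delta> T) + 2 * K) * real_of_int \<bar>n\<bar>
                 + real (Ldiam \<Delta> T) + K)"
proof (intro ballI allI)
  fix e and n :: int
  assume eE: "e \<in> Edge \<Delta>"
  let ?R = "RH \<Delta>"
  let ?E = "tree_edges T"
  have st: "spanning_tree \<Delta> T" by fact
  have symT: "\<And>f. f \<in> ?E \<Longrightarrow> prod.swap f \<in> ?E"
    unfolding tree_edges_def by (auto simp: insert_commute)
  have acyc: "\<not> (\<exists>u es. 3 \<le> length es \<and> cpath ?E u u es \<and> distinct (map fst es))"
    using st unfolding spanning_tree_def by blast
  have teq: "tgeod T u v = P" if g: "geod ?E u v P" for u v P
  proof -
    have "(THE es. geod ?E u v es) = P"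
      by (rule the_equality) (use g geod_unique[OF symT acyc] in blast)+
    then show ?thesis unfolding tgeod_def geod_def by simp
  qed
  have TsubE: "?E \<subseteq> Edge \<Delta>"
    using st unfolding spanning_tree_def tree_edges_def Edge_def by auto
  have ev: "fst e \<in> vertices \<Delta>" using eE unfolding Edge_def vertices_def by auto
  obtain es0 where "cpath ?E q (fst e) es0"
    using st assms(5) ev unfolding spanning_tree_def by blast
  then have "\<exists>P. geod ?E q (fst e) P" by (rule geod_exists)
  then obtain ps where gps: "geod ?E q (fst e) ps" by blast
  have cps: "cpath ?E q (fst e) ps" using gps unfolding geod_def by blast
  have tps: "tgeod T q (fst e) = ps" using teq gps by blast
  have trev: "tgeod T (fst e) q = rev (map prod.swap ps)" using teq geod_rev[OF symT gps] by blast
  have psE: "\<forall>f\<in>set ps. f \<in> Edge \<Delta>" using cpath_set[OF cps] TsubE by blast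
  define k where "k = length ps"
  have kL: "k \<le> Ldiam \<Delta> T"
  proof -
    have fin: "finite {length (tgeod T u v) | u v. u \<in> vertices \<Delta> \<and> v \<in> vertices \<Delta>}"
      by (rule finite_image_set2) simp_all
    have "\<exists>u v. length (tgeod T q (fst e)) = length (tgeod T u v) \<and> u \<in> vertices \<Delta> \<and> v \<in> vertices \<Delta>"
      by (intro exI[of _ q] exI[of _ "fst e"]) (simp add: assms(5) ev)
    then have mem: "length (tgeod T q (fst e)) \<in> {length (tgeod T u v) | u v. u \<in> vertices \<Delta> \<and> v \<in> vertices \<Delta>}"
      by (simp only: mem_Collect_eq)
    show ?thesis unfolding k_def Ldiam_def using Max_ge[OF fin mem] tps by simp
  qed
  have pre: "tgeod T q (fst f) = qs \<and> tgeod T (snd f) q = rev (map prod.swap (qs@[f]))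
        \<and> tgeod T q (snd f) = qs@[f] \<and> tgeod T (fst f) q = rev (map prod.swap qs)"
    if sp: "ps = qs @ f # rest" for qs f rest
  proof -
    have "cpath ?E q (fst e) (qs @ (f # rest))" using cps sp by simp
    then obtain w where w: "cpath ?E q w qs" "cpath ?E w (fst e) (f # rest)"
      unfolding cpath_append by blast
    then have wf: "w = fst f" by simp
    have c1: "cpath ?E q (fst f) qs" using w wf by simp
    have c2: "cpath ?E q (snd f) (qs @ [f])" unfolding cpath_append using c1 w(2) wf by auto
    have g1: "geod ?E q (fst f) qs" using geod_split[of ?E q "fst e" qs "f#rest" "fst f"] gps sp c1 by simp
    have g2: "geod ?E q (snd f) (qs@[f])"
      using geod_split[of ?E q "fst e" "qs@[f]" rest "snd f"] gps sp c2 by simp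
    show ?thesis using teq g1 g2 geod_rev[OF symT g1] geod_rev[OF symT g2] by blast
  qed
  define N where "N = nat \<bar>n\<bar>"
  define N1 where "N1 = nat \<bar>n+1\<bar>"
  have pn_eq: "pn T m u v = Pf (tgeod T u v) m" for m u v by (simp add: pn_def Pf_def)
  have pb_eq: "Pf (rev (map prod.swap xs)) m = Pb xs m" for xs m by (simp add: Pf_def Pb_def)

  have S1: "EE ?R (Phi T q n (map (\<lambda>f. (f, True)) qs)) (Pf qs (n+1) @ Pb qs n) (length qs * length qs * N)"
    if "\<exists>rest. ps = qs @ rest" for qs
    using that
  proof (induction qs rule: rev_induct)
    case Nil then show ?case using EE_refl by simp
  next
    case (snoc f qs)
    obtain rest where sp: "ps = qs @ f # rest" using snoc.prems by auto
    have IH: "EE ?R (Phi T q n (map (\<lambda>f. (f, True)) qs)) (Pf qs (n+1) @ Pb qs n) (length qs * length qs * N)"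
      using snoc.IH sp by blast
    have qsE: "\<forall>f\<in>set qs. f \<in> Edge \<Delta>" using psE sp by auto
    note P = pre[OF sp]
    have letter: "Phi_letter T q n (f, True) = Pf qs n @ lpow f (n+1) @ Pb (qs@[f]) n"
      unfolding Phi_letter_def using P by (simp add: pn_eq pb_eq)
    let ?Y = "lpow f (n+1) @ Pb (qs@[f]) n"
    have e1: "EE ?R (Phi T q n (map (\<lambda>f. (f, True)) (qs@[f])))
                    (Pf qs (n+1) @ Pb qs n @ Pf qs n @ ?Y) (length qs * length qs * N)"
      by (rule EE_cong'[OF IH, of _ "[]" "Pf qs n @ ?Y"]) (simp_all add: Phi_cons letter)
    have "EE ?R (Pb qs n @ Pf qs n) [] (length qs * N)"
      unfolding EE_DD using telescope[OF qsE, of n] N_def by simp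
    then have e2: "EE ?R (Pf qs (n+1) @ Pb qs n @ Pf qs n @ ?Y) (Pf (qs@[f]) (n+1) @ Pb (qs@[f]) n) (length qs * N)"
      by (rule EE_cong'[of _ _ _ _ _ "Pf qs (n+1)" ?Y]) simp_all
    have "EE ?R (Phi T q n (map (\<lambda>f. (f, True)) (qs@[f]))) (Pf (qs@[f]) (n+1) @ Pb (qs@[f]) n)
            (length qs * length qs * N + length qs * N)"
      using EE_trans[OF e1 e2] .
    moreover have "length qs * length qs * N + length qs * N \<le> length (qs@[f]) * length (qs@[f]) * N"
      by (simp add: algebra_simps)
    ultimately show ?case by (rule EE_mono)
  qed

  have S2: "EE ?R (Phi T q n (map (\<lambda>f. (f, True)) (rev (map prod.swap qs)))) (Pf qs n @ Pb qs (n+1)) (length qs * length qs * N)"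
    if "\<exists>rest. ps = qs @ rest" for qs
    using that
  proof (induction qs rule: rev_induct)
    case Nil then show ?case using EE_refl by simp
  next
    case (snoc f qs)
    obtain rest where sp: "ps = qs @ f # rest" using snoc.prems by auto
    have IH: "EE ?R (Phi T q n (map (\<lambda>f. (f, True)) (rev (map prod.swap qs)))) (Pf qs n @ Pb qs (n+1)) (length qs * length qs * N)"
      using snoc.IH sp by blast
    have qsE: "\<forall>f\<in>set qs. f \<in> Edge \<Delta>" using psE sp by auto
    note P = pre[OF sp]
    have letter: "Phi_letter T q n (prod.swap f, True) = Pf (qs@[f]) n @ lpow (prod.swap f) (n+1) @ Pb qs n"
      unfolding Phi_letter_def using P by (simp add: pn_eq pb_eq)
    let ?Z = "Pf (qs@[f]) n @ lpow (prod.swap f) (n+1) @ Pb qs n"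
    have e1: "EE ?R (Phi T q n (map (\<lambda>f. (f, True)) (rev (map prod.swap (qs@[f])))))
                    (?Z @ Pf qs n @ Pb qs (n+1)) (length qs * length qs * N)"
      by (rule EE_cong'[OF IH, of _ ?Z "[]"]) (simp_all add: Phi_cons letter)
    have "EE ?R (Pb qs n @ Pf qs n) [] (length qs * N)"
      unfolding EE_DD using telescope[OF qsE, of n] N_def by simp
    then have e2: "EE ?R (?Z @ Pf qs n @ Pb qs (n+1)) (Pf (qs@[f]) n @ Pb (qs@[f]) (n+1)) (length qs * N)"
      by (rule EE_cong'[of _ _ _ _ _ "Pf (qs@[f]) n @ lpow (prod.swap f) (n+1)" "Pb qs (n+1)"]) simp_all
    have "EE ?R (Phi T q n (map (\<lambda>f. (f, True)) (rev (map prod.swap (qs@[f]))))) (Pf (qs@[f]) n @ Pb (qs@[f]) (n+1))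
            (length qs * length qs * N + length qs * N)"
      using EE_trans[OF e1 e2] .
    moreover have "length qs * length qs * N + length qs * N \<le> length (qs@[f]) * length (qs@[f]) * N"
      by (simp add: algebra_simps)
    ultimately show ?case by (rule EE_mono)
  qed

  let ?A = "\<lambda>m. Pf ps m"
  let ?Ab = "\<lambda>m. Pb ps m"
  let ?B = "\<lambda>m. pn T m (snd e) q"
  let ?F = "Phi T q n (map (\<lambda>f. (f, True)) ps)"
  let ?G = "Phi T q n (map (\<lambda>f. (f, True)) (rev (map prod.swap ps)))"
  have s1: "EE ?R ?F (?A (n+1) @ ?Ab n) (k*k*N)" using S1[of ps] k_def by simp
  have s2: "EE ?R ?G (?A n @ ?Ab (n+1)) (k*k*N)" using S2[of ps] k_def by simp
  have weq: "we T q e = map (\<lambda>f. (f, True)) ps @ [(e, True)] @ map (\<lambda>f. (f, True)) (rev (map prod.swap ps))"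
    unfolding we_def pn_def tps trev concat_lpow1 ..
  have le: "Phi_letter T q n (e, True) = ?A n @ lpow e (n+1) @ ?B n"
    unfolding Phi_letter_def by (simp add: pn_eq tps)
  have W0: "Phi T q n (we T q e) = ?F @ (?A n @ lpow e (n+1) @ ?B n) @ ?G"
    unfolding weq by (simp add: Phi_cons le)
  have le1: "Phi T q (n+1) [(e, True)] = ?A (n+1) @ lpow e (n+1+1) @ ?B (n+1)"
    unfolding Phi_def Phi_letter_def by (simp add: pn_eq tps)
  obtain a1 where a1: "DD ?R (?A n @ lpow e n @ ?B n) a1" "real a1 \<le> K * (real_of_int \<bar>n\<bar>)\<^sup>2"
  proof -
    have "ereal_of_enat (Area ?R (?A n @ lpow e n @ ?B n)) \<le> ereal (K * (real_of_int \<bar>n\<bar>)\<^sup>2)"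
      using assms(6)[rule_format, OF eE, of n] by (simp only: pn_eq tps)
    then obtain a where "Area ?R (?A n @ lpow e n @ ?B n) = enat a" "real a \<le> K * (real_of_int \<bar>n\<bar>)\<^sup>2"
      using ereal_enat_bound by blast
    then show ?thesis using that Area_DD by blast
  qed
  obtain a2 where a2: "DD ?R (?A (n+1) @ lpow e (n+1) @ ?B (n+1)) a2" "real a2 \<le> K * (real_of_int \<bar>n+1\<bar>)\<^sup>2"
  proof -
    have "ereal_of_enat (Area ?R (?A (n+1) @ lpow e (n+1) @ ?B (n+1))) \<le> ereal (K * (real_of_int \<bar>n+1\<bar>)\<^sup>2)"
      using assms(6)[rule_format, OF eE, of "n+1"] by (simp only: pn_eq tps)
    then obtain a where "Area ?R (?A (n+1) @ lpow e (n+1) @ ?B (n+1)) = enat a" "real a \<le> K * (real_of_int \<bar>n+1\<bar>)\<^sup>2"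
      using ereal_enat_bound by blast
    then show ?thesis using that Area_DD by blast
  qed
  have K0: "0 \<le> K"
  proof -
    have "ereal_of_enat (Area ?R (?A 1 @ lpow e 1 @ ?B 1)) \<le> ereal (K * (real_of_int \<bar>1\<bar>)\<^sup>2)"
      using assms(6)[rule_format, OF eE, of 1] by (simp only: pn_eq tps)
    then obtain a where "real a \<le> K * (real_of_int \<bar>1\<bar>)\<^sup>2"
      using ereal_enat_bound by blast
    then show ?thesis by simp
  qed
  have h1: "EE ?R (?B n @ ?A n) (inv_word (lpow e n)) a1"
    unfolding EE_def using DD_rot[of ?R "?A n @ lpow e n" "?B n" a1] a1(1) by simp
  have h2: "EE ?R (?B (n+1)) (inv_word (?A (n+1) @ lpow e (n+1))) a2"
    unfolding EE_def using DD_rot[of ?R "?A (n+1) @ lpow e (n+1)" "?B (n+1)" a2] a2(1) by simp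
  have tel0: "EE ?R (?Ab n @ ?A n) [] (k*N)" unfolding EE_DD using telescope[OF psE, of n] k_def N_def by simp
  have tel1: "EE ?R (?Ab (n+1)) (inv_word (?A (n+1))) (k*N1)"
    unfolding EE_def using telescope[OF psE, of "n+1"] k_def N1_def by simp
  let ?W1 = "(?A (n+1) @ ?Ab n) @ (?A n @ lpow e (n+1) @ ?B n) @ ?G"
  let ?W2 = "?A (n+1) @ lpow e (n+1) @ ?B n @ ?G"
  let ?W3 = "?A (n+1) @ lpow e (n+1) @ ?B n @ (?A n @ ?Ab (n+1))"
  let ?W4 = "?A (n+1) @ lpow e (n+1) @ inv_word (lpow e n) @ ?Ab (n+1)"
  let ?W5 = "?A (n+1) @ lpow e (n+1) @ inv_word (lpow e n) @ inv_word (?A (n+1))"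
  let ?W6 = "?A (n+1) @ [(e, True)] @ inv_word (?A (n+1))"
  have w1: "EE ?R (Phi T q n (we T q e)) ?W1 (k*k*N)"
    unfolding W0 by (rule EE_cong'[OF s1, of _ "[]" "(?A n @ lpow e (n+1) @ ?B n) @ ?G"]) simp_all
  have w2: "EE ?R ?W1 ?W2 (k*N)"
    by (rule EE_cong'[OF tel0, of _ "?A (n+1)" "lpow e (n+1) @ ?B n @ ?G"]) simp_all
  have w3: "EE ?R ?W2 ?W3 (k*k*N)"
    by (rule EE_cong'[OF s2, of _ "?A (n+1) @ lpow e (n+1) @ ?B n" "[]"]) simp_all
  have w4: "EE ?R ?W3 ?W4 a1"
    by (rule EE_cong'[OF h1, of _ "?A (n+1) @ lpow e (n+1)" "?Ab (n+1)"]) simp_all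
  have w5: "EE ?R ?W4 ?W5 (k*N1)"
    by (rule EE_cong'[OF tel1, of _ "?A (n+1) @ lpow e (n+1) @ inv_word (lpow e n)" "[]"]) simp_all
  have w6: "EE ?R ?W5 ?W6 0"
    by (rule EE_cong'[OF EE_free[OF lpow_step[of e n]], of _ "?A (n+1)" "inv_word (?A (n+1))"]) simp_all
  have wall: "EE ?R (Phi T q n (we T q e)) ?W6 (k*k*N + k*N + k*k*N + a1 + k*N1 + 0)"
    using EE_trans[OF EE_trans[OF EE_trans[OF EE_trans[OF EE_trans[OF w1 w2] w3] w4] w5] w6] .
  have v1: "EE ?R (Phi T q (n+1) [(e, True)]) (?A (n+1) @ lpow e (n+1+1) @ (inv_word (lpow e (n+1)) @ inv_word (?A (n+1)))) a2"
    unfolding le1 by (rule EE_cong'[OF h2, of _ "?A (n+1) @ lpow e (n+1+1)" "[]"]) simp_all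
  have v2: "EE ?R (?A (n+1) @ lpow e (n+1+1) @ (inv_word (lpow e (n+1)) @ inv_word (?A (n+1)))) ?W6 0"
    by (rule EE_cong'[OF EE_free[OF lpow_step[of e "n+1"]], of _ "?A (n+1)" "inv_word (?A (n+1))"]) simp_all
  have vall: "EE ?R (Phi T q (n+1) [(e, True)]) ?W6 (a2 + 0)" using EE_trans[OF v1 v2] .
  define tot where "tot = a2 + 0 + (k*k*N + k*N + k*k*N + a1 + k*N1 + 0)"
  have fin: "DD ?R (Phi T q (n + 1) [(e, True)] @ inv_word (Phi T q n (we T q e))) tot"
    using EE_trans[OF vall EE_sym[OF wall]] unfolding EE_def tot_def .
  have arealess: "Area ?R (Phi T q (n + 1) [(e, True)] @ inv_word (Phi T q n (we T q e))) \<le> enat tot"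
    using DD_Area[OF fin] .
  then have ar: "ereal_of_enat (Area ?R (Phi T q (n + 1) [(e, True)] @ inv_word (Phi T q n (we T q e)))) \<le> ereal (real tot)"
    by (cases "Area ?R (Phi T q (n + 1) [(e, True)] @ inv_word (Phi T q n (we T q e)))") auto
  define x where "x = real_of_int \<bar>n\<bar>"
  define L where "L = real (Ldiam \<Delta> T)"
  have x0: "0 \<le> x" unfolding x_def by simp
  have rN: "real N = x" unfolding N_def x_def by simp
  have rN1: "real N1 \<le> x + 1" unfolding N1_def x_def by simp
  have kr: "real k \<le> L" unfolding L_def using kL by simp
  have k0: "0 \<le> real k" by simp
  have rtot: "real tot = real a2 + 2 * (real k * real k * x) + real k * x + real a1 + real k * real N1"
    unfolding tot_def using rN by (simp add: algebra_simps)
  have b1: "real k * real k * x \<le> L * L * x"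
    using kr k0 x0 by (intro mult_right_mono mult_mono) auto
  have b2: "real k * x \<le> L * x" using kr x0 by (rule mult_right_mono)
  have b3: "real k * real N1 \<le> L * (x + 1)" using kr rN1 k0 by (intro mult_mono) auto
  have sq: "(real_of_int \<bar>n+1\<bar>)\<^sup>2 \<le> (x+1)\<^sup>2"
    unfolding x_def by (intro power_mono) auto
  have b4: "real a2 \<le> K * (x+1)\<^sup>2"
    using a2(2) mult_left_mono[OF sq K0] by linarith
  have b5: "real a1 \<le> K * x\<^sup>2" using a1(2) unfolding x_def .
  have exp1: "K * (x+1)\<^sup>2 = K * x\<^sup>2 + 2 * (K * x) + K" by (simp add: power2_eq_square algebra_simps)
  have exp2: "(3 * L\<^sup>2 + 2 * L + 2 * K) * x = 3 * (L * L * x) + 2 * (L * x) + 2 * (K * x)"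
    by (simp add: power2_eq_square algebra_simps)
  have exp3: "L * (x + 1) = L * x + L" by (simp add: algebra_simps)
  have LLx: "0 \<le> L * L * x" using x0 by simp
  have "real tot \<le> 2 * K * x\<^sup>2 + (3 * L\<^sup>2 + 2 * L + 2 * K) * x + L + K"
    using rtot b1 b2 b3 b4 b5 exp1 exp2 exp3 LLx by linarith
  then show "ereal_of_enat (Area ?R (Phi T q (n + 1) [(e, True)] @ inv_word (Phi T q n (we T q e))))
             \<le> ereal (2 * K * (real_of_int \<bar>n\<bar>)\<^sup>2
                 + (3 * (real (Ldiam \<Delta> T))\<^sup>2 + 2 * real (Ldiam \<Delta> T) + 2 * K) * real_of_int \<bar>n\<bar>
                 + real (Ldiam \<Delta> T) + K)"
    using ar unfolding x_def L_def by (meson ereal_less_eq(3) order_trans)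
qed

end
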